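(* For each $n$, let $P$ be a symmetric $n\times n$ matrix with entries in $[0,1]$ and $P_{ij}=\omega(\log n/n)$ for all pairs $i\ne j$. For a random graph $G$ generated from $P$, with high probability $|\mathrm{BC}(G)-\mathbb{E}[\mathrm{BC}(G)]|=o(\mathbb{E}[\mathrm{BC}(G)])$.
   Context: A random graph generated from $P$ on $V=\{v_1,\dots,v_n\}$ contains each edge $(v_i,v_j)$ independently with probability $P_{ij}$, with unit weight; $w_{ij}=1$ if the edge is present and $0$ otherwise. $\mathrm{BC}(G)=\sum\min\{w_{ij}+w_{ik},w_{ij}+w_{jk},w_{ik}+w_{jk}\}$ over all unordered triples $\{i,j,k\}$ of distinct indices. "With high probability" means with probability larger than $1-n^{-\varepsilon}$ for some constant $\varepsilon>0$. *)

theory Defs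
  imports "HOL-Probability.Probability"
begin

text \<open>Vertices are indexed 0,...,n-1. Unordered pairs are encoded as (i,j) with i < j.\<close>

definition pairs :: "nat \<Rightarrow> (nat \<times> nat) set" where
  "pairs n = {(i, j). i < j \<and> j < n}"

definition random_graph :: "nat \<Rightarrow> (nat \<Rightarrow> nat \<Rightarrow> real) \<Rightarrow> (nat \<times> nat \<Rightarrow> bool) pmf" where
  "random_graph n P = Pi_pmf (pairs n) False (\<lambda>(i, j). bernoulli_pmf (P i j))"

definition wt :: "(nat \<times> nat \<Rightarrow> bool) \<Rightarrow> nat \<Rightarrow> nat \<Rightarrow> real" where
  "wt G i j = (if i < j then (if G (i, j) then 1 else 0)
               else if j < i then (if G (j, i) then 1 else 0) else 0)"

definition BC :: "nat \<Rightarrow> (nat \<times> nat \<Rightarrow> bool) \<Rightarrow> real" where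
  "BC n G = (\<Sum>(i, j, k) \<in> {(i, j, k). i < j \<and> j < k \<and> k < n}.
      min (wt G i j + wt G i k) (min (wt G i j + wt G j k) (wt G i k + wt G j k)))"

end

theory Submission
  imports Defs "HOL-Real_Asymp.Real_Asymp"
begin

definition mo :: "(nat \<times> nat) set \<Rightarrow> (nat \<times> nat \<Rightarrow> bool) \<Rightarrow> real" where
  "mo A G = (if \<forall>e\<in>A. G e then 1 else 0)"

definition pp :: "(nat \<Rightarrow> nat \<Rightarrow> real) \<Rightarrow> nat \<times> nat \<Rightarrow> real" where
  "pp p e = p (fst e) (snd e)"

definition PI :: "(nat \<Rightarrow> nat \<Rightarrow> real) \<Rightarrow> (nat \<times> nat) set \<Rightarrow> real" where
  "PI p A = (\<Prod>e\<in>A. pp p e)"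

lemma mo_mult: "mo A G * mo B G = mo (A \<union> B) G"
  by (auto simp: mo_def)

lemma finite_pairs: "finite (pairs n)"
proof -
  have "pairs n \<subseteq> {..<n} \<times> {..<n}" by (auto simp: pairs_def)
  thus ?thesis by (rule finite_subset) auto
qed

lemma finite_set_rg: "finite (set_pmf (random_graph n p))"
proof -
  have "set_pmf (random_graph n p) \<subseteq> PiE_dflt (pairs n) False (set_pmf \<circ> (\<lambda>(i, j). bernoulli_pmf (p i j)))"
    unfolding random_graph_def by (rule set_Pi_pmf_subset'[OF finite_pairs])
  moreover have "finite (PiE_dflt (pairs n) False (set_pmf \<circ> (\<lambda>(i, j). bernoulli_pmf (p i j))))"
    by (rule finite_PiE_dflt[OF finite_pairs]) auto
  ultimately show ?thesis by (rule finite_subset)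
qed

lemma intg[simp]: "integrable (measure_pmf (random_graph n p)) (f :: _ \<Rightarrow> real)"
  by (rule integrable_measure_pmf_finite[OF finite_set_rg])

lemma E_mo:
  assumes rng: "\<And>i j. i < n \<Longrightarrow> j < n \<Longrightarrow> 0 \<le> p i j \<and> p i j \<le> 1"
    and A: "A \<subseteq> pairs n"
  shows "measure_pmf.expectation (random_graph n p) (mo A) = PI p A"
proof -
  define f where "f = (\<lambda>e (v::bool). if e \<in> A then (if v then 1 else 0) else (1::real))"
  have eq: "mo A G = (\<Prod>e\<in>pairs n. f e (G e))" for G
  proof (cases "\<forall>e\<in>A. G e")
    case True
    have "(\<Prod>e\<in>pairs n. f e (G e)) = 1" using True by (intro prod.neutral) (auto simp: f_def)
    then show ?thesis using True by (simp add: mo_def)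
  next
    case False
    then obtain e where "e \<in> A" "\<not> G e" by auto
    then show ?thesis using A finite_pairs
      by (auto simp: mo_def f_def intro!: prod_zero[symmetric] bexI[of _ e])
  qed
  have "measure_pmf.expectation (random_graph n p) (mo A)
      = measure_pmf.expectation (Pi_pmf (pairs n) False (\<lambda>(i, j). bernoulli_pmf (p i j))) (\<lambda>G. \<Prod>e\<in>pairs n. f e (G e))"
    unfolding random_graph_def eq ..
  also have "\<dots> = (\<Prod>e\<in>pairs n. measure_pmf.expectation ((\<lambda>(i, j). bernoulli_pmf (p i j)) e) (f e))"
    by (rule expectation_prod_Pi_pmf[OF finite_pairs])
       (auto simp: f_def intro!: integrable_measure_pmf_finite)
  also have "\<dots> = (\<Prod>e\<in>pairs n. if e \<in> A then pp p e else 1)"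
  proof (rule prod.cong[OF refl])
    fix e assume "e \<in> pairs n"
    then obtain i j where e: "e = (i, j)" "i < n" "j < n" by (auto simp: pairs_def)
    show "measure_pmf.expectation ((\<lambda>(i, j). bernoulli_pmf (p i j)) e) (f e) = (if e \<in> A then pp p e else 1)"
      using rng[OF e(2,3)] by (simp add: e f_def pp_def)
  qed
  also have "\<dots> = PI p A"
    unfolding PI_def using A finite_pairs
    by (simp add: prod.If_cases Int_absorb1)
  finally show ?thesis .
qed

definition xg :: "(nat \<times> nat \<Rightarrow> bool) \<Rightarrow> nat \<times> nat \<Rightarrow> real" where
  "xg G e = (if G e then 1 else 0)"

definition fT :: "(nat \<times> nat \<Rightarrow> bool) \<Rightarrow> nat \<times> nat \<Rightarrow> nat \<times> nat \<Rightarrow> nat \<times> nat \<Rightarrow> real" where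
  "fT G e f g = min (xg G e + xg G f) (min (xg G e + xg G g) (xg G f + xg G g))"

lemma fT_mo: "fT G e f g = mo {e,f} G + mo {e,g} G + mo {f,g} G - mo {e,f,g} G"
  by (cases "G e"; cases "G f"; cases "G g") (auto simp: fT_def xg_def mo_def)

lemma fT_sq: "fT G e f g ^ 2 \<le> 2 * fT G e f g"
  by (cases "G e"; cases "G f"; cases "G g") (auto simp: fT_def xg_def)

lemma fT_nonneg: "fT G e f g \<ge> 0"
  by (cases "G e"; cases "G f"; cases "G g") (auto simp: fT_def xg_def)

lemma fT_perm1: "fT G e f g = fT G f e g"
  by (cases "G e"; cases "G f"; cases "G g") (auto simp: fT_def xg_def)
lemma fT_perm2: "fT G e f g = fT G e g f"
  by (cases "G e"; cases "G f"; cases "G g") (auto simp: fT_def xg_def)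

context
  fixes n :: nat and p :: "nat \<Rightarrow> nat \<Rightarrow> real"
  assumes rng: "\<And>i j. i < n \<Longrightarrow> j < n \<Longrightarrow> 0 \<le> p i j \<and> p i j \<le> 1"
begin

abbreviation EE where "EE \<equiv> measure_pmf.expectation (random_graph n p)"

lemma E_mo': "A \<subseteq> pairs n \<Longrightarrow> EE (mo A) = PI p A"
  by (rule E_mo[OF rng])

lemma pp_rng: "e \<in> pairs n \<Longrightarrow> 0 \<le> pp p e \<and> pp p e \<le> 1"
  using rng by (auto simp: pp_def pairs_def)

lemma E_fT:
  assumes "e \<in> pairs n" "f \<in> pairs n" "g \<in> pairs n" "distinct [e,f,g]"
  shows "EE (\<lambda>G. fT G e f g) = pp p e * pp p f + pp p e * pp p g + pp p f * pp p g - pp p e * pp p f * pp p g"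
  using assms by (simp add: fT_mo E_mo' PI_def)

lemma E_fT2:
  "EE (\<lambda>G. fT G e f g * fT G e' f' g') =
   EE (mo ({e,f} \<union> {e',f'})) + EE (mo ({e,f} \<union> {e',g'})) + EE (mo ({e,f} \<union> {f',g'})) - EE (mo ({e,f} \<union> {e',f',g'}))
 + EE (mo ({e,g} \<union> {e',f'})) + EE (mo ({e,g} \<union> {e',g'})) + EE (mo ({e,g} \<union> {f',g'})) - EE (mo ({e,g} \<union> {e',f',g'}))
 + EE (mo ({f,g} \<union> {e',f'})) + EE (mo ({f,g} \<union> {e',g'})) + EE (mo ({f,g} \<union> {f',g'})) - EE (mo ({f,g} \<union> {e',f',g'}))
 - EE (mo ({e,f,g} \<union> {e',f'})) - EE (mo ({e,f,g} \<union> {e',g'})) - EE (mo ({e,f,g} \<union> {f',g'})) + EE (mo ({e,f,g} \<union> {e',f',g'}))"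
proof -
  have "(\<lambda>G. fT G e f g * fT G e' f' g') = (\<lambda>G.
   mo ({e,f} \<union> {e',f'}) G + mo ({e,f} \<union> {e',g'}) G + mo ({e,f} \<union> {f',g'}) G - mo ({e,f} \<union> {e',f',g'}) G
 + mo ({e,g} \<union> {e',f'}) G + mo ({e,g} \<union> {e',g'}) G + mo ({e,g} \<union> {f',g'}) G - mo ({e,g} \<union> {e',f',g'}) G
 + mo ({f,g} \<union> {e',f'}) G + mo ({f,g} \<union> {e',g'}) G + mo ({f,g} \<union> {f',g'}) G - mo ({f,g} \<union> {e',f',g'}) G
 - mo ({e,f,g} \<union> {e',f'}) G - mo ({e,f,g} \<union> {e',g'}) G - mo ({e,f,g} \<union> {f',g'}) G + mo ({e,f,g} \<union> {e',f',g'}) G)"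
    by (simp only: fT_mo ring_distribs mo_mult[symmetric]) (simp add: algebra_simps)
  then show ?thesis by simp
qed

lemma cov_share:
  assumes "e \<in> pairs n" "f \<in> pairs n" "g \<in> pairs n" "f' \<in> pairs n" "g' \<in> pairs n"
    "distinct [e,f,g,f',g']"
  shows "EE (\<lambda>G. fT G e f g * fT G e f' g') - EE (\<lambda>G. fT G e f g) * EE (\<lambda>G. fT G e f' g')
     \<le> pp p e * (pp p f + pp p g) * (pp p f' + pp p g')"
proof -
  have dd: "e \<noteq> f" "e \<noteq> g" "e \<noteq> f'" "e \<noteq> g'" "f \<noteq> e" "f \<noteq> g" "f \<noteq> f'" "f \<noteq> g'" "g \<noteq> e" "g \<noteq> f" "g \<noteq> f'" "g \<noteq> g'" "f' \<noteq> e" "f' \<noteq> f" "f' \<noteq> g" "f' \<noteq> g'" "g' \<noteq> e" "g' \<noteq> f" "g' \<noteq> g" "g' \<noteq> f'" using assms(6) by auto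
  define a b c d h where "a = pp p e" "b = pp p f" "c = pp p g" "d = pp p f'" "h = pp p g'"
  have r: "0 \<le> a" "a \<le> 1" "0 \<le> b" "b \<le> 1" "0 \<le> c" "c \<le> 1" "0 \<le> d" "d \<le> 1" "0 \<le> h" "h \<le> 1"
    using pp_rng assms unfolding a_b_c_d_h_def by auto
  have "EE (\<lambda>G. fT G e f g * fT G e f' g') - EE (\<lambda>G. fT G e f g) * EE (\<lambda>G. fT G e f' g')
      = a * (1 - a) * (b + c - b * c) * (d + h - d * h)"
    unfolding E_fT2 using assms dd
    by (simp add: E_fT E_mo' PI_def a_b_c_d_h_def prod.insert_if) (simp add: algebra_simps)
  also have "\<dots> \<le> a * 1 * (b + c) * (d + h)"
    using r mult_left_le[of c b] mult_left_le[of h d] by (intro mult_mono) (auto simp: mult_nonneg_nonneg)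
  finally show ?thesis by (simp add: a_b_c_d_h_def)
qed

lemma cov_disj:
  assumes "e \<in> pairs n" "f \<in> pairs n" "g \<in> pairs n" "e' \<in> pairs n" "f' \<in> pairs n" "g' \<in> pairs n"
    "distinct [e,f,g,e',f',g']"
  shows "EE (\<lambda>G. fT G e f g * fT G e' f' g') = EE (\<lambda>G. fT G e f g) * EE (\<lambda>G. fT G e' f' g')"
proof -
  have dd: "e \<noteq> f" "e \<noteq> g" "e \<noteq> e'" "e \<noteq> f'" "e \<noteq> g'" "f \<noteq> e" "f \<noteq> g" "f \<noteq> e'" "f \<noteq> f'" "f \<noteq> g'" "g \<noteq> e" "g \<noteq> f" "g \<noteq> e'" "g \<noteq> f'" "g \<noteq> g'" "e' \<noteq> e" "e' \<noteq> f" "e' \<noteq> g" "e' \<noteq> f'" "e' \<noteq> g'" "f' \<noteq> e" "f' \<noteq> f" "f' \<noteq> g" "f' \<noteq> e'" "f' \<noteq> g'" "g' \<noteq> e" "g' \<noteq> f" "g' \<noteq> g" "g' \<noteq> e'" "g' \<noteq> f'" using assms(7) by auto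
  show ?thesis
  unfolding E_fT2 using assms dd
  by (simp add: E_fT E_mo' PI_def) (simp add: algebra_simps)
qed

lemma var_fT:
  assumes "e \<in> pairs n" "f \<in> pairs n" "g \<in> pairs n"
  shows "EE (\<lambda>G. fT G e f g * fT G e f g) - EE (\<lambda>G. fT G e f g) * EE (\<lambda>G. fT G e f g)
     \<le> 2 * EE (\<lambda>G. fT G e f g)"
proof -
  have "EE (\<lambda>G. fT G e f g * fT G e f g) \<le> EE (\<lambda>G. 2 * fT G e f g)"
    by (intro integral_mono) (auto simp: fT_sq[unfolded power2_eq_square])
  moreover have "EE (\<lambda>G. 2 * fT G e f g) = 2 * EE (\<lambda>G. fT G e f g)" by simp
  moreover have "EE (\<lambda>G. fT G e f g) * EE (\<lambda>G. fT G e f g) \<ge> 0" by simp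
  ultimately show ?thesis by linarith
qed

end

definition Tr :: "nat \<Rightarrow> (nat \<times> nat \<times> nat) set" where
  "Tr n = {(a, b, c). a < b \<and> b < c \<and> c < n}"

definition ET :: "nat \<times> nat \<times> nat \<Rightarrow> (nat \<times> nat) set" where
  "ET T = (case T of (a, b, c) \<Rightarrow> {(a, b), (a, c), (b, c)})"

definition FT :: "(nat \<times> nat \<Rightarrow> bool) \<Rightarrow> nat \<times> nat \<times> nat \<Rightarrow> real" where
  "FT G T = (case T of (a, b, c) \<Rightarrow> fT G (a, b) (a, c) (b, c))"

definition DT :: "(nat \<Rightarrow> nat \<Rightarrow> real) \<Rightarrow> nat \<times> nat \<times> nat \<Rightarrow> nat \<times> nat \<Rightarrow> real" where
  "DT p T e = (case T of (a, b, c) \<Rightarrow>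
     (if e = (a, b) then pp p (a, c) + pp p (b, c) else 0) +
     (if e = (a, c) then pp p (a, b) + pp p (b, c) else 0) +
     (if e = (b, c) then pp p (a, b) + pp p (a, c) else 0))"

definition e2 :: "(nat \<Rightarrow> nat \<Rightarrow> real) \<Rightarrow> nat \<times> nat \<times> nat \<Rightarrow> real" where
  "e2 p T = (case T of (a, b, c) \<Rightarrow>
     pp p (a, b) * pp p (a, c) + pp p (a, b) * pp p (b, c) + pp p (a, c) * pp p (b, c))"

lemma finite_Tr: "finite (Tr n)"
proof -
  have "Tr n \<subseteq> {..<n} \<times> {..<n} \<times> {..<n}" by (auto simp: Tr_def)
  thus ?thesis by (rule finite_subset) auto
qed

lemma BC_FT: "BC n G = (\<Sum>T\<in>Tr n. FT G T)"
  unfolding BC_def Tr_def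
  by (intro sum.cong refl) (auto simp: FT_def fT_def wt_def xg_def)

lemma ET_pairs: "T \<in> Tr n \<Longrightarrow> ET T \<subseteq> pairs n"
  by (auto simp: Tr_def ET_def pairs_def)

lemma share2:
  assumes "T \<in> Tr n" "T' \<in> Tr n" "x1 \<noteq> x2" "x1 \<in> ET T" "x2 \<in> ET T" "x1 \<in> ET T'" "x2 \<in> ET T'"
  shows "T = T'"
  using assms by (auto simp: Tr_def ET_def)

lemma rep:
  assumes "T \<in> Tr n" "e \<in> ET T"
  shows "\<exists>f g. (\<forall>G. FT G T = fT G e f g) \<and> ET T = {e, f, g} \<and> distinct [e, f, g]
      \<and> DT p T e = pp p f + pp p g"
proof -
  obtain a b c where T: "T = (a, b, c)" "a < b" "b < c" "c < n" using assms(1) by (auto simp: Tr_def)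
  have "e = (a, b) \<or> e = (a, c) \<or> e = (b, c)" using assms(2) by (auto simp: T ET_def)
  then show ?thesis
  proof (elim disjE)
    assume e: "e = (a, b)"
    show ?thesis
      by (rule exI[of _ "(a, c)"], rule exI[of _ "(b, c)"]) (use T e in \<open>auto simp: FT_def ET_def DT_def\<close>)
  next
    assume e: "e = (a, c)"
    show ?thesis
      by (rule exI[of _ "(a, b)"], rule exI[of _ "(b, c)"]) (use T e in \<open>auto simp: FT_def ET_def DT_def fT_perm1[of _ "(a,b)"]\<close>)
  next
    assume e: "e = (b, c)"
    have "fT G (a, b) (a, c) (b, c) = fT G (b, c) (a, b) (a, c)" for G
      by (metis fT_perm1 fT_perm2)
    then show ?thesis
      by (intro exI[of _ "(a, b)"] exI[of _ "(a, c)"]) (use T e in \<open>auto simp: FT_def ET_def DT_def\<close>)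
  qed
qed

lemma DT_nonneg:
  assumes rng: "\<And>i j. i < n \<Longrightarrow> j < n \<Longrightarrow> 0 \<le> p i j \<and> p i j \<le> 1" and "T \<in> Tr n"
  shows "DT p T e \<ge> 0"
  using assms(2) rng by (auto simp: Tr_def DT_def pp_def intro!: add_nonneg_nonneg)

lemma DT_out: "e \<notin> ET T \<Longrightarrow> DT p T e = 0"
  by (auto simp: ET_def DT_def split: prod.splits)

context
  fixes n :: nat and p :: "nat \<Rightarrow> nat \<Rightarrow> real"
  assumes rng: "\<And>i j. i < n \<Longrightarrow> j < n \<Longrightarrow> 0 \<le> p i j \<and> p i j \<le> 1"
begin

abbreviation EE' where "EE' \<equiv> measure_pmf.expectation (random_graph n p)"

lemma pp_nonneg: "e \<in> pairs n \<Longrightarrow> 0 \<le> pp p e"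
  using rng by (auto simp: pp_def pairs_def)

lemma sumterm_nonneg: "T \<in> Tr n \<Longrightarrow> T' \<in> Tr n \<Longrightarrow> 0 \<le> (\<Sum>e\<in>pairs n. pp p e * DT p T e * DT p T' e)"
  by (intro sum_nonneg mult_nonneg_nonneg DT_nonneg[OF rng] pp_nonneg)


lemma cov_T:
  assumes "T \<in> Tr n" "T' \<in> Tr n"
  shows "EE' (\<lambda>G. FT G T * FT G T') - EE' (\<lambda>G. FT G T) * EE' (\<lambda>G. FT G T')
    \<le> (if T = T' then 2 * EE' (\<lambda>G. FT G T) else 0) + (\<Sum>e\<in>pairs n. pp p e * DT p T e * DT p T' e)"
proof (cases "T = T'")
  case True
  obtain a b c where T: "T = (a, b, c)" "a < b" "b < c" "c < n" using assms(1) by (auto simp: Tr_def)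
  have "EE' (\<lambda>G. FT G T * FT G T') - EE' (\<lambda>G. FT G T) * EE' (\<lambda>G. FT G T') \<le> 2 * EE' (\<lambda>G. FT G T)"
    using var_fT[OF rng, where e="(a,b)" and f="(a,c)" and g="(b,c)"] T True by (simp add: FT_def pairs_def)
  then show ?thesis using True sumterm_nonneg[OF assms] by simp
next
  case False
  show ?thesis
  proof (cases "ET T \<inter> ET T' = {}")
    case True
    obtain a b c where T: "T = (a, b, c)" "a < b" "b < c" "c < n" using assms(1) by (auto simp: Tr_def)
    obtain a' b' c' where T': "T' = (a', b', c')" "a' < b'" "b' < c'" "c' < n" using assms(2) by (auto simp: Tr_def)
    have "EE' (\<lambda>G. FT G T * FT G T') = EE' (\<lambda>G. FT G T) * EE' (\<lambda>G. FT G T')"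
      using cov_disj[where n=n and p=p, OF rng, where e="(a,b)" and f="(a,c)" and g="(b,c)" and e'="(a',b')" and f'="(a',c')" and g'="(b',c')"] T T' True
      by (simp add: FT_def pairs_def ET_def) blast
    then show ?thesis using False sumterm_nonneg[OF assms] by simp
  next
    case nd: False
    then obtain e where e: "e \<in> ET T" "e \<in> ET T'" by auto
    obtain f g where fg: "\<forall>G. FT G T = fT G e f g" "ET T = {e, f, g}" "distinct [e, f, g]" "DT p T e = pp p f + pp p g"
      using rep[OF assms(1) e(1)] by blast
    obtain f' g' where fg': "\<forall>G. FT G T' = fT G e f' g'" "ET T' = {e, f', g'}" "distinct [e, f', g']" "DT p T' e = pp p f' + pp p g'"
      using rep[OF assms(2) e(2)] by blast
    have nin: "f \<notin> ET T'" "g \<notin> ET T'"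
      using share2[OF assms, of e f] share2[OF assms, of e g] False fg e by auto
    have dist: "distinct [e, f, g, f', g']" using fg fg' nin by auto
    have inp: "e \<in> pairs n" "f \<in> pairs n" "g \<in> pairs n" "f' \<in> pairs n" "g' \<in> pairs n"
      using ET_pairs[OF assms(1)] ET_pairs[OF assms(2)] fg fg' by auto
    have "EE' (\<lambda>G. FT G T * FT G T') - EE' (\<lambda>G. FT G T) * EE' (\<lambda>G. FT G T')
        \<le> pp p e * DT p T e * DT p T' e"
      using cov_share[OF rng inp dist] fg fg' by simp
    also have "\<dots> \<le> (\<Sum>e\<in>pairs n. pp p e * DT p T e * DT p T' e)"
      by (rule member_le_sum) (use inp in \<open>auto intro!: mult_nonneg_nonneg DT_nonneg[OF rng] assms pp_nonneg finite_pairs\<close>)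
    finally show ?thesis using False by simp
  qed
qed

end

lemma sum_Tr: "(\<Sum>T\<in>Tr n. h T) = (\<Sum>c<n. \<Sum>b<c. \<Sum>a<b. (h (a,b,c) :: real))"
proof -
  have "(\<Sum>c<n. \<Sum>b<c. \<Sum>a<b. h (a,b,c)) = (\<Sum>c<n. \<Sum>(b,a)\<in>(SIGMA b:{..<c}. {..<b}). h (a,b,c))"
    by (intro sum.cong refl) (simp add: sum.Sigma)
  also have "\<dots> = (\<Sum>(c,ba)\<in>(SIGMA c:{..<n}. SIGMA b:{..<c}. {..<b}). case ba of (b,a) \<Rightarrow> h (a,b,c))"
    by (subst sum.Sigma) (auto simp: split_def)
  also have "\<dots> = (\<Sum>T\<in>Tr n. h T)"
    by (rule sum.reindex_bij_witness[where i="\<lambda>(a,b,c). (c,b,a)" and j="\<lambda>(c,b,a). (a,b,c)"])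
       (auto simp: Tr_def)
  finally show ?thesis ..
qed

lemma sum_pairs: "(\<Sum>e\<in>pairs n. h e) = (\<Sum>j<n. \<Sum>i<j. (h (i,j) :: real))"
proof -
  have "(\<Sum>j<n. \<Sum>i<j. h (i,j)) = (\<Sum>(j,i)\<in>(SIGMA j:{..<n}. {..<j}). h (i,j))"
    by (subst sum.Sigma) auto
  also have "\<dots> = (\<Sum>e\<in>pairs n. h e)"
    by (rule sum.reindex_bij_witness[where i="\<lambda>(i,j). (j,i)" and j="\<lambda>(j,i). (i,j)"])
       (auto simp: pairs_def)
  finally show ?thesis ..
qed

lemma sum_ifQ: "(\<Sum>b\<in>A. (if P b then (if Q then f b else 0) else 0)) = (if Q then (\<Sum>b\<in>A. if P b then f b else 0) else (0::real))"
  by (cases Q) (simp_all only: if_True if_False if_cancel sum.neutral_const)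

lemma sum_ifQ2: "(\<Sum>b\<in>A. (if P then (if Q then f b else 0) else 0)) = (if P then if Q then sum f A else 0 else (0::real))"
  by (cases Q; cases P) (simp_all only: if_True if_False if_cancel sum.neutral_const)

lemma R_exact:
  assumes "i < j" "j < n"
  shows "(\<Sum>T\<in>Tr n. DT p T (i,j)) =
    (\<Sum>c<n. if j < c then pp p (i,c) + pp p (j,c) else 0) +
    (\<Sum>b<j. if i < b then pp p (i,b) + pp p (b,j) else 0) +
    (\<Sum>a<i. pp p (a,i) + pp p (a,j))"
proof -
  have 1: "(\<Sum>c<n. \<Sum>b<c. if i < b then if j = b then pp p (i, c) + pp p (b, c) else 0 else 0)
     = (\<Sum>c<n. if j < c then pp p (i,c) + pp p (j,c) else 0)"
  proof (intro sum.cong refl)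
    fix c
    have "(\<Sum>b<c. if i < b then if j = b then pp p (i, c) + pp p (b, c) else 0 else 0)
       = (\<Sum>b<c. if j = b then pp p (i, c) + pp p (j, c) else 0)"
      using assms by (intro sum.cong refl) auto
    also have "\<dots> = (if j < c then pp p (i,c) + pp p (j,c) else 0)"
      by (simp add: sum.delta)
    finally show "(\<Sum>b<c. if i < b then if j = b then pp p (i, c) + pp p (b, c) else 0 else 0)
       = (if j < c then pp p (i,c) + pp p (j,c) else 0)" .
  qed
  have 2: "(\<Sum>c<n. \<Sum>b<c. if i < b then if j = c then pp p (i, b) + pp p (b, c) else 0 else 0)
     = (\<Sum>b<j. if i < b then pp p (i,b) + pp p (b,j) else 0)"
  proof -
    have "(\<Sum>c<n. \<Sum>b<c. if i < b then if j = c then pp p (i, b) + pp p (b, c) else 0 else 0)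
      = (\<Sum>c<n. if j = c then (\<Sum>b<c. if i < b then pp p (i, b) + pp p (b, c) else 0) else 0)"
      by (rule sum.cong[OF refl]) (simp only: sum_ifQ)
    also have "\<dots> = (\<Sum>b<j. if i < b then pp p (i,b) + pp p (b,j) else 0)"
      using assms by (simp add: sum.delta)
    finally show ?thesis .
  qed
  have 3: "(\<Sum>c<n. \<Sum>b<c. \<Sum>a<b. if i = b then if j = c then pp p (a, b) + pp p (a, c) else 0 else 0)
     = (\<Sum>a<i. pp p (a,i) + pp p (a,j))"
  proof -
    have "(\<Sum>c<n. \<Sum>b<c. \<Sum>a<b. if i = b then if j = c then pp p (a, b) + pp p (a, c) else 0 else 0)
      = (\<Sum>c<n. if j = c then (\<Sum>b<c. if i = b then (\<Sum>a<b. pp p (a, b) + pp p (a, c)) else 0) else 0)"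
      by (rule sum.cong[OF refl]) (simp only: sum_ifQ2, simp only: sum_ifQ)
    also have "\<dots> = (\<Sum>a<i. pp p (a,i) + pp p (a,j))"
      using assms by (simp add: sum.delta)
    finally show ?thesis .
  qed
  show ?thesis
    unfolding sum_Tr
    by (simp add: DT_def sum.distrib if_if_eq_conj[symmetric] sum.delta sum.delta' cong: if_cong)
       (simp only: 1 2 3 sum.distrib)
qed


definition sv :: "nat \<Rightarrow> (nat \<Rightarrow> nat \<Rightarrow> real) \<Rightarrow> nat \<Rightarrow> real" where
  "sv n p i = (\<Sum>c<n. if c = i then 0 else p i c)"

lemma sum_lt_ext: "(m::nat) \<le> n \<Longrightarrow> (\<Sum>c<m. f c) = (\<Sum>c<n. if c < m then f c else (0::real))"
proof -
  assume "m \<le> n"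
  then have "{..<n} \<inter> {x. x < m} = {..<m}" by auto
  then show ?thesis by (simp add: sum.If_cases)
qed

lemma R_s:
  assumes sym: "\<And>a b. a < n \<Longrightarrow> b < n \<Longrightarrow> p a b = p b a" and ij: "i < j" "j < n"
  shows "(\<Sum>T\<in>Tr n. DT p T (i,j)) = sv n p i + sv n p j - 2 * p i j"
proof -
  have a: "(\<Sum>b<j. if i < b then pp p (i,b) + pp p (b,j) else 0) = (\<Sum>c<n. if c < j then (if i < c then p i c + p j c else 0) else 0)"
    using ij sym by (subst sum_lt_ext[of j n]) (auto simp: pp_def intro!: sum.cong)
  have b: "(\<Sum>a<i. pp p (a,i) + pp p (a,j)) = (\<Sum>c<n. if c < i then p i c + p j c else 0)"
    using ij sym by (subst sum_lt_ext[of i n]) (auto simp: pp_def intro!: sum.cong)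
  have "(\<Sum>T\<in>Tr n. DT p T (i,j)) = (\<Sum>c<n. if c \<noteq> i \<and> c \<noteq> j then p i c + p j c else 0)"
    unfolding R_exact[OF ij] a b
    using ij by (simp add: pp_def sum.distrib[symmetric]) (intro sum.cong refl, auto simp: pp_def)
  also have "\<dots> = (\<Sum>c<n. (if c = i then 0 else p i c) + (if c = j then 0 else p j c)
      - (if c = j then p i j else 0) - (if c = i then p j i else 0))"
    using ij by (intro sum.cong refl) auto
  also have "\<dots> = sv n p i + sv n p j - 2 * p i j"
    using ij sym[of i j] by (simp add: sum.distrib sum_subtractf sv_def sum.delta')
  finally show ?thesis .
qed

lemma sym_sum: "(\<Sum>j<(n::nat). \<Sum>i<j. F i j + F j i) = (\<Sum>i<n. \<Sum>c<n. if c = i then 0 else (F i c :: real))"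
proof (induction n)
  case 0 then show ?case by simp
next
  case (Suc n)
  have "(\<Sum>i<Suc n. \<Sum>c<Suc n. if c = i then 0 else F i c)
      = (\<Sum>i<n. \<Sum>c<n. if c = i then 0 else F i c) + (\<Sum>i<n. F i n) + (\<Sum>c<n. F n c)"
    by (simp add: sum.distrib)
  also have "(\<Sum>c<n. F n c) = (\<Sum>c<n. if c = n then 0 else F n c)"
    by (intro sum.cong) auto
  finally show ?case using Suc by (simp add: sum.distrib)
qed

context
  fixes n :: nat and p :: "nat \<Rightarrow> nat \<Rightarrow> real"
  assumes rng: "\<And>i j. i < n \<Longrightarrow> j < n \<Longrightarrow> 0 \<le> p i j \<and> p i j \<le> 1"
    and sym: "\<And>a b. a < n \<Longrightarrow> b < n \<Longrightarrow> p a b = p b a"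
begin

abbreviation EXP where "EXP \<equiv> measure_pmf.expectation (random_graph n p)"

lemma pp_ge: "e \<in> pairs n \<Longrightarrow> 0 \<le> pp p e" and pp_le: "e \<in> pairs n \<Longrightarrow> pp p e \<le> 1"
  using rng by (auto simp: pp_def pairs_def)

lemma sum_pp_sv: "(\<Sum>e\<in>pairs n. pp p e * (sv n p (fst e) + sv n p (snd e))) = (\<Sum>i<n. sv n p i ^ 2)"
proof -
  have "(\<Sum>e\<in>pairs n. pp p e * (sv n p (fst e) + sv n p (snd e)))
     = (\<Sum>j<n. \<Sum>i<j. p i j * sv n p i + p j i * sv n p j)"
    unfolding sum_pairs using sym by (intro sum.cong refl) (auto simp: pp_def algebra_simps)
  also have "\<dots> = (\<Sum>i<n. \<Sum>c<n. if c = i then 0 else p i c * sv n p i)"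
    by (rule sym_sum)
  also have "\<dots> = (\<Sum>i<n. sv n p i ^ 2)"
  proof (intro sum.cong refl)
    fix i
    have "(\<Sum>c<n. if c = i then 0 else p i c * sv n p i) = (\<Sum>c<n. (if c = i then 0 else p i c) * sv n p i)"
      by (intro sum.cong refl) auto
    also have "\<dots> = sv n p i ^ 2" by (simp add: sum_distrib_right[symmetric] sv_def power2_eq_square)
    finally show "(\<Sum>c<n. if c = i then 0 else p i c * sv n p i) = sv n p i ^ 2" .
  qed
  finally show ?thesis .
qed

lemma sum_pp: "(\<Sum>e\<in>pairs n. pp p e) = (\<Sum>i<n. sv n p i) / 2"
proof -
  have "2 * (\<Sum>e\<in>pairs n. pp p e) = (\<Sum>j<n. \<Sum>i<j. p i j + p j i)"
    unfolding sum_pairs using sym by (simp add: sum_distrib_left pp_def)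
  also have "\<dots> = (\<Sum>i<n. sv n p i)"
    unfolding sym_sum sv_def ..
  finally show ?thesis by simp
qed


definition e3 :: "(nat \<Rightarrow> nat \<Rightarrow> real) \<Rightarrow> nat \<times> nat \<times> nat \<Rightarrow> real" where
  "e3 q T = (case T of (a, b, c) \<Rightarrow> pp q (a, b) * pp q (a, c) * pp q (b, c))"

lemma EFT: "T \<in> Tr n \<Longrightarrow> EXP (\<lambda>G. FT G T) = e2 p T - e3 p T"
  using E_fT[where n=n and p=p, OF rng]
  by (auto simp: Tr_def FT_def e2_def e3_def pairs_def)

lemma EFT_lower: "T \<in> Tr n \<Longrightarrow> (2/3) * e2 p T \<le> EXP (\<lambda>G. FT G T)"
proof -
  assume T: "T \<in> Tr n"
  then obtain a b c where abc: "T = (a,b,c)" "a < b" "b < c" "c < n" by (auto simp: Tr_def)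
  define x y z where "x = pp p (a,b)" "y = pp p (a,c)" "z = pp p (b,c)"
  have r: "0 \<le> x" "x \<le> 1" "0 \<le> y" "y \<le> 1" "0 \<le> z" "z \<le> 1"
    using abc pp_ge pp_le unfolding x_y_z_def by (auto simp: pairs_def)
  have "x * y * z \<le> x * y" "x * y * z \<le> x * z" "x * y * z \<le> y * z"
  proof -
    have "(x*y)*z \<le> x*y" "(x*z)*y \<le> x*z" "(y*z)*x \<le> y*z"
      using r by (intro mult_left_le; simp)+
    then show "x * y * z \<le> x * y" "x * y * z \<le> x * z" "x * y * z \<le> y * z"
      by (simp_all add: ac_simps)
  qed
  then show ?thesis using EFT[OF T] abc by (simp add: e2_def e3_def x_y_z_def)
qed

lemma EFT_upper: "T \<in> Tr n \<Longrightarrow> EXP (\<lambda>G. FT G T) \<le> e2 p T"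
proof -
  assume T: "T \<in> Tr n"
  then obtain a b c where abc: "T = (a,b,c)" "a < b" "b < c" "c < n" by (auto simp: Tr_def)
  have "0 \<le> e3 p T" using abc pp_ge by (auto simp: e3_def pairs_def)
  then show ?thesis using EFT[OF T] by simp
qed

lemma sum_ppDT: "T \<in> Tr n \<Longrightarrow> (\<Sum>e\<in>pairs n. pp p e * DT p T e) = 2 * e2 p T"
proof -
  assume T: "T \<in> Tr n"
  then obtain a b c where abc: "T = (a,b,c)" "a < b" "b < c" "c < n" by (auto simp: Tr_def)
  have m: "(a,b) \<in> pairs n" "(a,c) \<in> pairs n" "(b,c) \<in> pairs n" using abc by (auto simp: pairs_def)
  have "(\<Sum>e\<in>pairs n. pp p e * DT p T e) =
     (\<Sum>e\<in>pairs n. (if e = (a,b) then pp p (a,b) * (pp p (a, c) + pp p (b, c)) else 0) +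
        (if e = (a,c) then pp p (a,c) * (pp p (a, b) + pp p (b, c)) else 0) +
        (if e = (b,c) then pp p (b,c) * (pp p (a, b) + pp p (a, c)) else 0))"
    by (intro sum.cong refl) (auto simp: abc DT_def)
  also have "\<dots> = 2 * e2 p T"
    using m finite_pairs by (simp add: sum.distrib sum.delta' abc e2_def algebra_simps)
  finally show ?thesis .
qed

lemma mu_eq: "EXP (BC n) = (\<Sum>T\<in>Tr n. EXP (\<lambda>G. FT G T))"
proof -
  have "EXP (BC n) = EXP (\<lambda>G. \<Sum>T\<in>Tr n. FT G T)" by (simp add: BC_FT[abs_def])
  also have "\<dots> = (\<Sum>T\<in>Tr n. EXP (\<lambda>G. FT G T))" by (rule Bochner_Integration.integral_sum) simp
  finally show ?thesis .
qed

lemma var_eq: "measure_pmf.variance (random_graph n p) (BC n) =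
   (\<Sum>T\<in>Tr n. \<Sum>T'\<in>Tr n. EXP (\<lambda>G. FT G T * FT G T') - EXP (\<lambda>G. FT G T) * EXP (\<lambda>G. FT G T'))"
proof -
  have "measure_pmf.variance (random_graph n p) (BC n) = EXP (\<lambda>G. (BC n G)^2) - (EXP (BC n))^2"
    by (rule measure_pmf.variance_eq) simp_all
  also have "EXP (\<lambda>G. (BC n G)^2) = EXP (\<lambda>G. \<Sum>T\<in>Tr n. \<Sum>T'\<in>Tr n. FT G T * FT G T')"
    by (simp add: BC_FT power2_eq_square sum_product)
  also have "\<dots> = (\<Sum>T\<in>Tr n. \<Sum>T'\<in>Tr n. EXP (\<lambda>G. FT G T * FT G T'))"
    by (simp add: Bochner_Integration.integral_sum)
  also have "(EXP (BC n))^2 = (\<Sum>T\<in>Tr n. \<Sum>T'\<in>Tr n. EXP (\<lambda>G. FT G T) * EXP (\<lambda>G. FT G T'))"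
    by (simp add: mu_eq power2_eq_square sum_product)
  finally show ?thesis by (simp add: sum_subtractf)
qed

lemma var_le: "measure_pmf.variance (random_graph n p) (BC n) \<le>
   2 * EXP (BC n) + (\<Sum>e\<in>pairs n. pp p e * (\<Sum>T\<in>Tr n. DT p T e)^2)"
proof -
  have "measure_pmf.variance (random_graph n p) (BC n) \<le>
     (\<Sum>T\<in>Tr n. \<Sum>T'\<in>Tr n. (if T = T' then 2 * EXP (\<lambda>G. FT G T) else 0) + (\<Sum>e\<in>pairs n. pp p e * DT p T e * DT p T' e))"
    unfolding var_eq by (intro sum_mono cov_T[where n=n and p=p, OF rng]) auto
  also have "\<dots> = 2 * EXP (BC n) + (\<Sum>T\<in>Tr n. \<Sum>T'\<in>Tr n. \<Sum>e\<in>pairs n. pp p e * DT p T e * DT p T' e)"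
    by (simp add: sum.distrib mu_eq sum_distrib_left finite_Tr)
  also have "(\<Sum>T\<in>Tr n. \<Sum>T'\<in>Tr n. \<Sum>e\<in>pairs n. pp p e * DT p T e * DT p T' e)
      = (\<Sum>e\<in>pairs n. pp p e * (\<Sum>T\<in>Tr n. DT p T e)^2)"
  proof -
    have "(\<Sum>T\<in>Tr n. \<Sum>T'\<in>Tr n. \<Sum>e\<in>pairs n. pp p e * DT p T e * DT p T' e)
       = (\<Sum>e\<in>pairs n. \<Sum>T\<in>Tr n. \<Sum>T'\<in>Tr n. pp p e * DT p T e * DT p T' e)"
    proof -
      have "(\<Sum>T\<in>Tr n. \<Sum>T'\<in>Tr n. \<Sum>e\<in>pairs n. pp p e * DT p T e * DT p T' e)
         = (\<Sum>T\<in>Tr n. \<Sum>e\<in>pairs n. \<Sum>T'\<in>Tr n. pp p e * DT p T e * DT p T' e)"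
        by (rule sum.cong[OF refl], rule sum.swap)
      also have "\<dots> = (\<Sum>e\<in>pairs n. \<Sum>T\<in>Tr n. \<Sum>T'\<in>Tr n. pp p e * DT p T e * DT p T' e)"
        by (rule sum.swap)
      finally show ?thesis .
    qed
    also have "\<dots> = (\<Sum>e\<in>pairs n. pp p e * (\<Sum>T\<in>Tr n. DT p T e)^2)"
      unfolding power2_eq_square sum_product by (simp only: sum_distrib_left mult.assoc)
    finally show ?thesis .
  qed
  finally show ?thesis .
qed

end

context
  fixes n :: nat and p :: "nat \<Rightarrow> nat \<Rightarrow> real"
  assumes rng: "\<And>i j. i < n \<Longrightarrow> j < n \<Longrightarrow> 0 \<le> p i j \<and> p i j \<le> 1"
    and sym: "\<And>a b. a < n \<Longrightarrow> b < n \<Longrightarrow> p a b = p b a"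
    and sv2: "\<And>i. i < n \<Longrightarrow> 2 \<le> sv n p i"
begin

abbreviation "RR e \<equiv> (\<Sum>T\<in>Tr n. DT p T e)"
abbreviation "QQ \<equiv> (\<Sum>i<n. sv n p i ^ 2)"
abbreviation "WW \<equiv> (\<Sum>e\<in>pairs n. pp p e * RR e)"
abbreviation "MU \<equiv> measure_pmf.expectation (random_graph n p) (BC n)"

lemma WW_e2: "WW = 2 * (\<Sum>T\<in>Tr n. e2 p T)"
proof -
  have "WW = (\<Sum>e\<in>pairs n. \<Sum>T\<in>Tr n. pp p e * DT p T e)" by (simp add: sum_distrib_left)
  also have "\<dots> = (\<Sum>T\<in>Tr n. \<Sum>e\<in>pairs n. pp p e * DT p T e)" by (rule sum.swap)
  also have "\<dots> = (\<Sum>T\<in>Tr n. 2 * e2 p T)" by (intro sum.cong refl sum_ppDT[OF rng sym])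
  finally show ?thesis by (simp add: sum_distrib_left)
qed

lemma WW_Q: "WW = QQ - 2 * (\<Sum>e\<in>pairs n. pp p e ^ 2)"
proof -
  have "WW = (\<Sum>e\<in>pairs n. pp p e * (sv n p (fst e) + sv n p (snd e)) - 2 * pp p e ^ 2)"
  proof (intro sum.cong refl)
    fix e assume "e \<in> pairs n"
    then obtain i j where e: "e = (i,j)" "i < j" "j < n" by (auto simp: pairs_def)
    show "pp p e * RR e = pp p e * (sv n p (fst e) + sv n p (snd e)) - 2 * pp p e ^ 2"
      using e by (simp add: R_s[of n p, OF sym e(2,3)] pp_def power2_eq_square algebra_simps)
  qed
  also have "\<dots> = QQ - 2 * (\<Sum>e\<in>pairs n. pp p e ^ 2)"
    by (simp add: sum_subtractf sum_pp_sv[OF rng sym] sum_distrib_left)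
  finally show ?thesis .
qed

lemma sv_nonneg: "i < n \<Longrightarrow> 0 \<le> sv n p i"
  unfolding sv_def using rng by (intro sum_nonneg) auto

lemma WW_lower: "QQ / 2 \<le> WW"
proof -
  have "(\<Sum>e\<in>pairs n. pp p e ^ 2) \<le> (\<Sum>e\<in>pairs n. pp p e)"
  proof (intro sum_mono)
    fix e assume "e \<in> pairs n"
    then have "0 \<le> pp p e" "pp p e \<le> 1" using pp_ge[OF rng sym] pp_le[OF rng sym] by auto
    then show "pp p e ^ 2 \<le> pp p e" by (simp add: power2_eq_square mult_left_le)
  qed
  also have "\<dots> = (\<Sum>i<n. sv n p i) / 2" by (rule sum_pp[OF rng sym])
  also have "(\<Sum>i<n. sv n p i) \<le> (\<Sum>i<n. sv n p i ^ 2 / 2)"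
  proof (intro sum_mono)
    fix i assume "i \<in> {..<n}"
    then have "2 \<le> sv n p i" using sv2 by auto
    then have "2 * sv n p i \<le> sv n p i * sv n p i" by (intro mult_right_mono) auto
    then show "sv n p i \<le> sv n p i ^ 2 / 2" by (simp add: power2_eq_square)
  qed
  finally have "(\<Sum>e\<in>pairs n. pp p e ^ 2) \<le> QQ / 4" by (simp add: sum_divide_distrib)
  then show ?thesis using WW_Q by simp
qed

lemma MU_bounds: "WW \<le> 3 * MU" "WW / 3 \<le> MU"
proof -
  have "MU = (\<Sum>T\<in>Tr n. measure_pmf.expectation (random_graph n p) (\<lambda>G. FT G T))" by (rule mu_eq[OF rng sym])
  moreover have "(\<Sum>T\<in>Tr n. (2/3) * e2 p T) \<le> (\<Sum>T\<in>Tr n. measure_pmf.expectation (random_graph n p) (\<lambda>G. FT G T))"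
    by (intro sum_mono EFT_lower[OF rng sym])
  ultimately have "(2/3) * (\<Sum>T\<in>Tr n. e2 p T) \<le> MU" by (simp add: sum_distrib_left)
  then show "WW \<le> 3 * MU" "WW / 3 \<le> MU" using WW_e2 by simp_all
qed

lemma sv_le: "i < n \<Longrightarrow> sv n p i \<le> sqrt QQ"
proof -
  assume i: "i < n"
  have "sv n p i ^ 2 \<le> QQ" using i by (intro member_le_sum) auto
  then show ?thesis using sv_nonneg[OF i] real_le_rsqrt by blast
qed

lemma RR_nonneg: "0 \<le> RR e"
  by (intro sum_nonneg DT_nonneg[OF rng])

lemma RR_le: "e \<in> pairs n \<Longrightarrow> RR e \<le> 2 * sqrt QQ"
proof -
  assume "e \<in> pairs n"
  then obtain i j where e: "e = (i,j)" "i < j" "j < n" by (auto simp: pairs_def)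
  have "RR e = sv n p i + sv n p j - 2 * p i j" using R_s[of n p, OF sym e(2,3)] e by simp
  also have "\<dots> \<le> sv n p i + sv n p j" using rng[of i j] e by auto
  also have "\<dots> \<le> 2 * sqrt QQ" using sv_le[of i] sv_le[of j] e by auto
  finally show ?thesis .
qed

lemma var_main: "measure_pmf.variance (random_graph n p) (BC n) \<le> 2 * MU + 6 * sqrt (6 * MU) * MU"
proof -
  have "(\<Sum>e\<in>pairs n. pp p e * RR e ^ 2) \<le> (\<Sum>e\<in>pairs n. pp p e * RR e * (2 * sqrt QQ))"
  proof (intro sum_mono)
    fix e assume e: "e \<in> pairs n"
    have "pp p e * RR e * RR e \<le> pp p e * RR e * (2 * sqrt QQ)"
      using e RR_le RR_nonneg pp_ge[OF rng sym] by (intro mult_left_mono) auto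
    then show "pp p e * RR e ^ 2 \<le> pp p e * RR e * (2 * sqrt QQ)" by (simp add: power2_eq_square mult.assoc)
  qed
  also have "\<dots> = 2 * sqrt QQ * WW" by (subst sum_distrib_left) (simp add: ac_simps)
  also have "\<dots> \<le> 2 * sqrt (6 * MU) * (3 * MU)"
  proof (rule mult_mono)
    have "QQ \<le> 6 * MU" using WW_lower MU_bounds by simp
    then show "2 * sqrt QQ \<le> 2 * sqrt (6 * MU)" by simp
    show "WW \<le> 3 * MU" by (rule MU_bounds)
    show "0 \<le> 2 * sqrt (6 * MU)" using WW_lower MU_bounds sum_nonneg[of "{..<n}" "\<lambda>i. sv n p i ^ 2"] by simp
    show "0 \<le> WW" by (intro sum_nonneg mult_nonneg_nonneg RR_nonneg pp_ge[OF rng sym])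
  qed
  finally have "(\<Sum>e\<in>pairs n. pp p e * RR e ^ 2) \<le> 6 * sqrt (6 * MU) * MU" by simp
  then show ?thesis using var_le[where n=n and p=p, OF rng sym] by simp
qed

lemma MU_lower: "2 * real n / 3 \<le> MU"
proof -
  have "(\<Sum>i<n. (4::real)) \<le> QQ"
  proof (intro sum_mono)
    fix i assume "i \<in> {..<n}"
    then have "2 \<le> sv n p i" using sv2 by auto
    then have "2 * 2 \<le> sv n p i * sv n p i" by (intro mult_mono) auto
    then show "4 \<le> sv n p i ^ 2" by (simp add: power2_eq_square)
  qed
  then have "4 * real n \<le> QQ" by simp
  then show ?thesis using WW_lower MU_bounds by simp
qed

end

lemma sv_ge2:
  assumes n: "n \<ge> 3" and lb: "\<forall>i<n. \<forall>j<n. i \<noteq> j \<longrightarrow> p i j \<ge> 4 * (ln (real n) / real n)"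
    and i: "i < n"
  shows "2 \<le> sv n p i"
proof -
  define L where "L = 4 * (ln (real n) / real n)"
  have "(\<Sum>c<n. if c = i then 0 else L) \<le> sv n p i"
    unfolding sv_def using lb i by (intro sum_mono) (auto simp: L_def)
  moreover have "(\<Sum>c<n. if c = i then 0 else L) = (real n - 1) * L"
  proof -
    have "(\<Sum>c<n. if c = i then 0 else L) = (\<Sum>c\<in>{..<n} - {i}. L)"
      by (simp add: sum.If_cases Diff_eq)
    also have "\<dots> = (real n - 1) * L" using i by (simp add: of_nat_diff)
    finally show ?thesis .
  qed
  moreover have "2 \<le> (real n - 1) * L"
  proof -
    have "exp 1 \<le> (3::real)" by (rule exp_le)
    then have "exp 1 \<le> real n" using n by linarith
    then have "1 \<le> ln (real n)" using ln_mono[of "exp 1" "real n"] by simp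
    moreover have "2 * real n \<le> (real n - 1) * 4" using n by simp
    ultimately have "2 * real n \<le> (real n - 1) * 4 * ln (real n)"
    proof -
      assume h: "1 \<le> ln (real n)" "2 * real n \<le> (real n - 1) * 4"
      have "(real n - 1) * 4 * 1 \<le> (real n - 1) * 4 * ln (real n)"
        using h n by (intro mult_left_mono) auto
      then show ?thesis using h by linarith
    qed
    then show ?thesis using n by (simp add: L_def field_simps)
  qed
  ultimately show ?thesis by linarith
qed
lemma key:
  fixes n :: nat and p :: "nat \<Rightarrow> nat \<Rightarrow> real"
  assumes rng: "\<And>i j. i < n \<Longrightarrow> j < n \<Longrightarrow> 0 \<le> p i j \<and> p i j \<le> 1"
    and sym: "\<And>a b. a < n \<Longrightarrow> b < n \<Longrightarrow> p a b = p b a"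
    and n: "n \<ge> 3"
    and lb: "\<forall>i<n. \<forall>j<n. i \<noteq> j \<longrightarrow> p i j \<ge> 4 * (ln (real n) / real n)"
  shows "measure_pmf.prob (random_graph n p)
            {G. \<bar>BC n G - measure_pmf.expectation (random_graph n p) (BC n)\<bar>
                \<le> real n powr (-1/8) * measure_pmf.expectation (random_graph n p) (BC n)}
          \<ge> 1 - 21 / (real n powr (1/8))^2"
proof -
  have sv2: "\<And>i. i < n \<Longrightarrow> 2 \<le> sv n p i" using sv_ge2[OF n lb] by blast 
  define m where "m = measure_pmf.expectation (random_graph n p) (BC n)"
  define V where "V = measure_pmf.variance (random_graph n p) (BC n)"
  define t where "t = real n powr (1/8)"
  have t0: "t > 0" using n by (simp add: t_def) 
  have t8: "t ^ 8 = real n"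
  proof -
    have "t ^ 8 = t powr (real 8)" using t0 by (simp add: powr_realpow) 
    also have "\<dots> = real n" unfolding t_def using n by (simp add: powr_powr) 
    finally show ?thesis .
  qed
  have dt: "real n powr (-1/8) = 1 / t"
  proof -
    have "real n powr (-1/8) = real n powr (-(1/8))" by simp 
    also have "\<dots> = inverse t" unfolding t_def by (rule powr_minus) 
    finally show ?thesis by (simp add: inverse_eq_divide) 
  qed
  have mlow: "2 * real n / 3 \<le> m" unfolding m_def by (rule MU_lower[OF rng sym sv2]) 
  have Vle: "V \<le> 2 * m + 6 * sqrt (6 * m) * m" unfolding V_def m_def by (rule var_main[OF rng sym sv2]) 
  define s where "s = sqrt (6 * m)"
  have m2: "m \<ge> 2" using mlow n by simp 
  have s0: "s \<ge> 0" and s2: "s^2 = 6 * m" using m2 by (auto simp: s_def) 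
  have sge: "s \<ge> 2"
  proof -
    have "sqrt 4 \<le> s" unfolding s_def using m2 by (intro real_sqrt_le_mono) simp 
    then show ?thesis by simp 
  qed
  have V7: "V \<le> 7 * s * m"
  proof -
    have "2 * m \<le> s * m" using sge m2 by (intro mult_right_mono) auto 
    then show ?thesis using Vle by (simp add: s_def) 
  qed
  have st: "s * t^4 \<le> 3 * m"
  proof -
    have "(s * t^4)^2 = 6 * m * real n" using s2 t8 by (simp add: power_mult_distrib power_mult[symmetric]) 
    also have "\<dots> \<le> (3 * m)^2"
    proof -
      have "3*m*(2*real n) \<le> 3*m*(3*m)" using mlow m2 by (intro mult_left_mono) auto 
      then show ?thesis by (simp add: power2_eq_square algebra_simps) 
    qed
    finally show ?thesis by (rule power2_le_imp_le) (use m2 in auto) 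
  qed
  define a where "a = m / t"
  have a0: "a > 0" using m2 t0 by (simp add: a_def) 
  have cheb: "measure_pmf.prob (random_graph n p) {G \<in> space (measure_pmf (random_graph n p)). \<bar>BC n G - m\<bar> \<ge> a} \<le> V / a^2"
    unfolding V_def m_def
 by (rule measure_pmf.Chebyshev_inequality) (use a0 in \<open>simp_all add: m_def\<close>) 
  have "V / a^2 \<le> 21 / t^2"
  proof -
    have "V / a^2 = V * t^2 / m^2" by (simp add: a_def power_divide) 
    also have "\<dots> \<le> 7 * s * m * t^2 / m^2"
      using V7 by (intro divide_right_mono mult_right_mono) auto 
    also have "\<dots> = 7 * s * t^2 / m" using m2 by (simp add: power2_eq_square field_simps) 
    also have "\<dots> \<le> 21 / t^2"
    proof -
      have "7 * s * t^2 * t^2 = 7 * (s * t^4)" by (simp add: mult.assoc power_add[symmetric]) 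
      then have "7 * s * t^2 * t^2 \<le> 21 * m" using st by simp 
      then show ?thesis using m2 t0 by (simp add: field_simps) 
    qed
    finally show ?thesis .
  qed
  have "1 - 21 / t^2 \<le> 1 - measure_pmf.prob (random_graph n p) {G. \<bar>BC n G - m\<bar> \<ge> a}"
    using cheb \<open>V / a^2 \<le> 21 / t^2\<close> by simp 
  also have "\<dots> = measure_pmf.prob (random_graph n p) (UNIV - {G. \<bar>BC n G - m\<bar> \<ge> a})"
 by (subst measure_pmf.prob_compl[symmetric]) auto 
  also have "\<dots> \<le> measure_pmf.prob (random_graph n p) {G. \<bar>BC n G - m\<bar> \<le> real n powr (-1/8) * m}"
    using dt by (intro measure_pmf.finite_measure_mono) (auto simp: a_def) 
  finally show ?thesis by (simp add: m_def t_def) 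
qed


theorem proposition4:
  fixes P :: "nat \<Rightarrow> nat \<Rightarrow> nat \<Rightarrow> real"
  assumes sym: "\<And>n i j. i < n \<Longrightarrow> j < n \<Longrightarrow> P n i j = P n j i"
    and range: "\<And>n i j. i < n \<Longrightarrow> j < n \<Longrightarrow> 0 \<le> P n i j \<and> P n i j \<le> 1"
    and omega: "\<And>C. C > 0 \<Longrightarrow> eventually (\<lambda>n. \<forall>i<n. \<forall>j<n. i \<noteq> j \<longrightarrow>
                   P n i j \<ge> C * (ln (real n) / real n)) sequentially"
  shows "\<exists>\<epsilon>>0. \<exists>\<delta>::nat \<Rightarrow> real. \<delta> \<longlonglongrightarrow> 0 \<and>
           eventually (\<lambda>n. measure_pmf.prob (random_graph n (P n))
              {G. \<bar>BC n G - measure_pmf.expectation (random_graph n (P n)) (BC n)\<bar>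
                  \<le> \<delta> n * measure_pmf.expectation (random_graph n (P n)) (BC n)}
              > 1 - real n powr (-\<epsilon>)) sequentially"
proof -
  have ev: "eventually (\<lambda>n. measure_pmf.prob (random_graph n (P n))
              {G. \<bar>BC n G - measure_pmf.expectation (random_graph n (P n)) (BC n)\<bar>
                  \<le> real n powr (-1/8) * measure_pmf.expectation (random_graph n (P n)) (BC n)}
              > 1 - real n powr (-(1/5))) sequentially"
  proof -
    have e1: "eventually (\<lambda>n. \<forall>i<n. \<forall>j<n. i \<noteq> j \<longrightarrow> P n i j \<ge> 4 * (ln (real n) / real n)) sequentially"
      using omega[of 4] by simp
    have e2: "eventually (\<lambda>n::nat. 21 / (real n powr (1/8))^2 < real n powr (-(1/5))) sequentially"
      by real_asymp
    have e3: "eventually (\<lambda>n::nat. n \<ge> 3) sequentially" by (rule eventually_ge_at_top)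
    show ?thesis using e1 e2 e3
    proof eventually_elim
      case (elim n)
      have "1 - 21 / (real n powr (1/8))^2 \<le> measure_pmf.prob (random_graph n (P n))
              {G. \<bar>BC n G - measure_pmf.expectation (random_graph n (P n)) (BC n)\<bar>
                  \<le> real n powr (-1/8) * measure_pmf.expectation (random_graph n (P n)) (BC n)}"
        by (rule key) (use elim range sym in auto)
      then show ?case using elim by linarith
    qed
  qed
  have d0: "(\<lambda>n::nat. real n powr (-1/8)) \<longlonglongrightarrow> 0" by real_asymp
  show ?thesis
    by (rule exI[of _ "1/5"], rule conjI, simp, rule exI[of _ "\<lambda>n. real n powr (-1/8)"]) (use d0 ev in simp)
qed

end
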